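(* Let $\beta_1,\dots,\beta_T\in(0,1)$ be a variance schedule, $\alpha_t:=1-\beta_t$, $\bar\alpha_t:=\prod_{s=1}^t\alpha_s$, and $S(z_0,\varepsilon,t):=\sqrt{\bar\alpha_t}\,z_0+\sqrt{1-\bar\alpha_t}\,\varepsilon$. Let $\varepsilon_\theta(z_t,c_{\mathrm{text}},c_{\mathrm{img}})$ be a conditional noise-prediction network with generation function $G(z_t,c_{\mathrm{text}},c_{\mathrm{img}}):=[z_t-\sqrt{1-\bar\alpha_t}\,\varepsilon_\theta(z_t,c_{\mathrm{text}},c_{\mathrm{img}})]/\sqrt{\bar\alpha_t}$, and let $\varepsilon^*_\theta(z_t,c_{\mathrm{text}})$ be the noise-prediction network of a fixed pre-trained text-guided latent diffusion model. Let $P(z_0,c_{\mathrm{text}})$ be a likelihood function that image $z_0$ lies in the data distribution specified by text condition $c_{\mathrm{text}}$, and assume (domain smoothness) that for every text condition $P(\cdot,c_{\mathrm{text}})$ is $L$-Lipschitz for some $L<\infty$: $|P(z^1_0,c_{\mathrm{text}})-P(z^2_0,c_{\mathrm{text}})|\le L\|z^1_0-z^2_0\|_2$. Let $c_y$ be the target text condition, $x_0$ a source image, $\varepsilon_x\sim\mathcal N(0,\mathbf I)$, and $x_t=S(x_0,\varepsilon_x,t)$. Define $$\mathcal L_{\mathrm{LDM}}=-\mathbb E_{x_0,\varepsilon_x}\,P\big[G(S(x_0,\varepsilon_x,t),c_y,x_0),c_y\big].$$ Then $$\mathcal L_{\mathrm{LDM}}\le \mathcal L_{\mathrm{self}}:=\mathbb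 E_{x_0,\varepsilon_x}\Big[L\sqrt{\tfrac{1-\bar\alpha_t}{\bar\alpha_t}}\,\big\|\varepsilon_\theta(x_t,c_y,x_0)-\varepsilon^*_\theta(x_t,c_y)\big\|_2\Big]+\mathrm{const},$$ where $\mathrm{const}$ is a quantity not depending on the network $\varepsilon_\theta$ (it depends only on the pre-trained model and $P$).
   Context: Setting: latent diffusion models for unpaired image-to-image translation from a source domain $\mathcal X$ to a target domain $\mathcal Y$ specified by the text condition $c_y$; the time-step dependence of the networks is suppressed in notation. *)

theory Defs
  imports "HOL-Probability.Probability"
begin

definition alpha_bar :: "(nat \<Rightarrow> real) \<Rightarrow> nat \<Rightarrow> real" where
  "alpha_bar \<beta> t = (\<Prod>s = 1..t. 1 - \<beta> s)"

definition fwd :: "(nat \<Rightarrow> real) \<Rightarrow> 'a::real_vector \<Rightarrow> 'a \<Rightarrow> nat \<Rightarrow> 'a" where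
  "fwd \<beta> z0 e t = sqrt (alpha_bar \<beta> t) *\<^sub>R z0 + sqrt (1 - alpha_bar \<beta> t) *\<^sub>R e"

definition gen :: "(nat \<Rightarrow> real) \<Rightarrow> nat \<Rightarrow> 'a::real_vector \<Rightarrow> 'a \<Rightarrow> 'a" where
  "gen \<beta> t zt epred = (1 / sqrt (alpha_bar \<beta> t)) *\<^sub>R (zt - sqrt (1 - alpha_bar \<beta> t) *\<^sub>R epred)"

definition std_gaussian :: "'a::euclidean_space measure" where
  "std_gaussian = density lborel
     (\<lambda>x. ennreal (exp (- (norm x)\<^sup>2 / 2) / (2 * pi) powr (real DIM('a) / 2)))"

end

theory Submission
  imports Defs
begin

theorem proposition2:
  fixes \<beta> :: "nat \<Rightarrow> real" and T t :: nat and L :: real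
    and P :: "'a::euclidean_space \<Rightarrow> 'c \<Rightarrow> real"
    and eps_star :: "'a \<Rightarrow> 'c \<Rightarrow> 'a"
    and c_y :: 'c and D :: "'a measure"
  assumes beta: "\<And>s. s \<in> {1..T} \<Longrightarrow> 0 < \<beta> s \<and> \<beta> s < 1"
    and t: "t \<in> {1..T}"
    and lip: "\<And>c z1 z2. \<bar>P z1 c - P z2 c\<bar> \<le> L * norm (z1 - z2)"
    and D: "prob_space D" "sets D = sets borel"
    and int_star: "integrable (D \<Otimes>\<^sub>M std_gaussian)
        (\<lambda>(x0, e). P (gen \<beta> t (fwd \<beta> x0 e t) (eps_star (fwd \<beta> x0 e t) c_y)) c_y)"
  shows "\<exists>const::real. \<forall>eps_theta :: 'a \<Rightarrow> 'c \<Rightarrow> 'a \<Rightarrow> 'a.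
    integrable (D \<Otimes>\<^sub>M std_gaussian)
        (\<lambda>(x0, e). P (gen \<beta> t (fwd \<beta> x0 e t) (eps_theta (fwd \<beta> x0 e t) c_y x0)) c_y)
    \<longrightarrow> integrable (D \<Otimes>\<^sub>M std_gaussian)
        (\<lambda>(x0, e). L * sqrt ((1 - alpha_bar \<beta> t) / alpha_bar \<beta> t)
            * norm (eps_theta (fwd \<beta> x0 e t) c_y x0 - eps_star (fwd \<beta> x0 e t) c_y))
    \<longrightarrow> - (\<integral>(x0, e). P (gen \<beta> t (fwd \<beta> x0 e t) (eps_theta (fwd \<beta> x0 e t) c_y x0)) c_y
              \<partial>(D \<Otimes>\<^sub>M std_gaussian))
        \<le> (\<integral>(x0, e). L * sqrt ((1 - alpha_bar \<beta> t) / alpha_bar \<beta> t)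
              * norm (eps_theta (fwd \<beta> x0 e t) c_y x0 - eps_star (fwd \<beta> x0 e t) c_y)
              \<partial>(D \<Otimes>\<^sub>M std_gaussian)) + const"
proof -
  let ?a = "alpha_bar \<beta> t"
  let ?M = "D \<Otimes>\<^sub>M std_gaussian"
  have a0: "0 < ?a" unfolding alpha_bar_def
    by (rule prod_pos) (use beta t in auto)
  have a1: "?a \<le> 1" unfolding alpha_bar_def
    by (rule prod_le_1) (use beta t in \<open>auto simp: less_imp_le\<close>)
  have key: "P (gen \<beta> t z w') c - P (gen \<beta> t z w) c \<le> L * sqrt ((1 - ?a) / ?a) * norm (w - w')"
    for c z w w'
  proof -
    define u where "u = gen \<beta> t z w"
    define v where "v = gen \<beta> t z w'"
    note that = u_def v_def
    have "u - v = (sqrt (1 - ?a) / sqrt ?a) *\<^sub>R (w' - w)"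
      using that a0 by (simp add: gen_def algebra_simps scaleR_diff_right)
    hence "norm (v - u) = sqrt ((1 - ?a) / ?a) * norm (w - w')"
      using a0 a1 by (simp add: real_sqrt_divide norm_minus_commute)
    moreover have "P v c - P u c \<le> L * norm (v - u)" using lip[of v c u] by linarith
    ultimately show ?thesis by (simp add: u_def v_def)
  qed
  show ?thesis
  proof (intro exI[of _ "- (\<integral>(x0, e). P (gen \<beta> t (fwd \<beta> x0 e t) (eps_star (fwd \<beta> x0 e t) c_y)) c_y \<partial>?M)"] allI impI)
    fix eps_theta :: "'a \<Rightarrow> 'c \<Rightarrow> 'a \<Rightarrow> 'a"
    assume i1: "integrable ?M (\<lambda>(x0, e). P (gen \<beta> t (fwd \<beta> x0 e t) (eps_theta (fwd \<beta> x0 e t) c_y x0)) c_y)"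
      and i2: "integrable ?M (\<lambda>(x0, e). L * sqrt ((1 - ?a) / ?a)
            * norm (eps_theta (fwd \<beta> x0 e t) c_y x0 - eps_star (fwd \<beta> x0 e t) c_y))"
    let ?f = "\<lambda>(x0, e). P (gen \<beta> t (fwd \<beta> x0 e t) (eps_theta (fwd \<beta> x0 e t) c_y x0)) c_y"
    let ?g = "\<lambda>(x0, e). L * sqrt ((1 - ?a) / ?a)
            * norm (eps_theta (fwd \<beta> x0 e t) c_y x0 - eps_star (fwd \<beta> x0 e t) c_y)"
    let ?h = "\<lambda>(x0, e). P (gen \<beta> t (fwd \<beta> x0 e t) (eps_star (fwd \<beta> x0 e t) c_y)) c_y"
    have "(\<integral>p. - ?f p \<partial>?M) \<le> (\<integral>p. ?g p - ?h p \<partial>?M)"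
    proof (rule integral_mono)
      show "integrable ?M (\<lambda>p. - ?f p)" using i1 by simp
      show "integrable ?M (\<lambda>p. ?g p - ?h p)" using Bochner_Integration.integrable_diff[OF i2 int_star] by simp
      fix p show "- ?f p \<le> ?g p - ?h p"
        proof (cases p)
        case (Pair x0 e)
        show ?thesis unfolding Pair using key[of "fwd \<beta> x0 e t" "eps_star (fwd \<beta> x0 e t) c_y" c_y "eps_theta (fwd \<beta> x0 e t) c_y x0"] by simp
      qed
    qed
    also have "\<dots> = integral\<^sup>L ?M ?g - integral\<^sup>L ?M ?h"
      using i2 int_star by (rule Bochner_Integration.integral_diff)
    finally show "- integral\<^sup>L ?M ?f \<le> integral\<^sup>L ?M ?g + - integral\<^sup>L ?M ?h" by simp
  qed
qed

end
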